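(* Assume (A9) of the context with constants $C_{\max}$ and $0<c<1$. Then for every $0<\epsilon<1-c$, with probability at least $1-\exp\big(-\frac{2n_q\epsilon^2}{C_{\max}^2}\big)$ over the sample $x_q^{(1)},\dots,x_q^{(n_q)}$, $$\sup_{x}\ \sup_{\delta\in\mathbb{R}^D:\|\delta\|\le\|\theta^*\|}\hat r(x;\theta^*+\delta)\le C'_{\mathrm{ratio}}:=\frac{C_{\max}}{1-c-\epsilon}<\infty.$$
   Context: $Q$ is a distribution on $\mathbb{R}^m$ with density $q$; $x_q^{(1)},\dots,x_q^{(n_q)}$ are i.i.d. from $Q$. $f:\mathbb{R}^m\to\mathbb{R}^D$ is a feature map; $r(x;\theta)=\exp(\theta^\top f(x))/N(\theta)$ with $N(\theta)=\mathbb{E}_{x\sim Q}[\exp(\theta^\top f(x))]$; $\hat N(\theta)=\frac1{n_q}\sum_i\exp(\theta^\top f(x_q^{(i)}))$; $\hat r(x;\theta)=\exp(\theta^\top f(x))/\hat N(\theta)$. $\theta^*\in\mathbb{R}^D$ is fixed; $\|\cdot\|$ is the Euclidean norm. (A9) For all $\delta$ with $\|\delta\|\le\|\theta^*\|$ and all $x$: $0<r(x;\theta^*+\delta)\le C_{\max}$; and $\mathbb{E}_{x\sim Q}\big[\inf_{\delta:\|\delta\|\le\|\theta^*\|}r(x;\theta^*+\delta)\big]\ge1-c$ for a constant $0<c<1$. *)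

theory Defs
  imports "HOL-Probability.Probability"
begin

definition Nnorm :: "'a measure \<Rightarrow> ('a \<Rightarrow> 'd::real_inner) \<Rightarrow> 'd \<Rightarrow> real" where
  "Nnorm Q f \<theta> = (\<integral>x. exp (\<theta> \<bullet> f x) \<partial>Q)"

definition ratio :: "'a measure \<Rightarrow> ('a \<Rightarrow> 'd::real_inner) \<Rightarrow> 'd \<Rightarrow> 'a \<Rightarrow> real" where
  "ratio Q f \<theta> x = exp (\<theta> \<bullet> f x) / Nnorm Q f \<theta>"

definition Nhat :: "('a \<Rightarrow> 'd::real_inner) \<Rightarrow> nat \<Rightarrow> (nat \<Rightarrow> 'a) \<Rightarrow> 'd \<Rightarrow> real" where
  "Nhat f n xs \<theta> = (\<Sum>i<n. exp (\<theta> \<bullet> f (xs i))) / real n"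

definition rhat :: "('a \<Rightarrow> 'd::real_inner) \<Rightarrow> nat \<Rightarrow> (nat \<Rightarrow> 'a) \<Rightarrow> 'd \<Rightarrow> 'a \<Rightarrow> real" where
  "rhat f n xs \<theta> x = exp (\<theta> \<bullet> f x) / Nhat f n xs \<theta>"

end

theory Submission
  imports Defs
begin

theorem proposition9:
  fixes Q :: "'a::euclidean_space measure"
    and q :: "'a \<Rightarrow> real"
    and f :: "'a \<Rightarrow> 'd::euclidean_space"
    and \<theta>s :: 'd
    and n :: nat
    and Cmax c \<epsilon> :: real
  assumes Q_density: "Q = density lborel (\<lambda>x. ennreal (q x))"
    and q_meas: "q \<in> borel_measurable lborel"
    and q_nonneg: "\<And>x. 0 \<le> q x"
    and Q_prob: "prob_space Q"
    and c_pos: "0 < c" and c_lt1: "c < 1"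
    and A9_bound: "\<And>\<delta> x. norm \<delta> \<le> norm \<theta>s \<Longrightarrow>
                     0 < ratio Q f (\<theta>s + \<delta>) x \<and> ratio Q f (\<theta>s + \<delta>) x \<le> Cmax"
    and A9_mean: "(\<integral>x. (INF \<delta>\<in>{\<delta>. norm \<delta> \<le> norm \<theta>s}. ratio Q f (\<theta>s + \<delta>) x) \<partial>Q) \<ge> 1 - c"
    and eps_pos: "0 < \<epsilon>" and eps_lt: "\<epsilon> < 1 - c"
  shows "\<exists>A \<in> sets (PiM {..<n} (\<lambda>_. Q)).
           A \<subseteq> {xs \<in> space (PiM {..<n} (\<lambda>_. Q)).
                   \<forall>x \<delta>. norm \<delta> \<le> norm \<theta>s \<longrightarrow>
                     rhat f n xs (\<theta>s + \<delta>) x \<le> Cmax / (1 - c - \<epsilon>)}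
         \<and> measure (PiM {..<n} (\<lambda>_. Q)) A \<ge> 1 - exp (- 2 * real n * \<epsilon>\<^sup>2 / Cmax\<^sup>2)"
proof -
  define D where "D = {\<delta>::'d. norm \<delta> \<le> norm \<theta>s}"
  define g where "g x = (INF \<delta>\<in>D. ratio Q f (\<theta>s + \<delta>) x)" for x
  have D0: "0 \<in> D" by (simp add: D_def)
  have bdd: "bdd_below ((\<lambda>\<delta>. ratio Q f (\<theta>s + \<delta>) x) ` D)" for x
    using A9_bound by (intro bdd_belowI[of _ 0]) (auto simp: D_def less_imp_le)
  have g_le: "g x \<le> ratio Q f (\<theta>s + \<delta>) x" if "\<delta> \<in> D" for x \<delta>
    unfolding g_def by (rule cINF_lower[OF bdd that])
  have g_nn: "0 \<le> g x" for x
    unfolding g_def using D0 A9_bound by (intro cINF_greatest) (auto simp: D_def less_imp_le)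
  have Cpos: "0 < Cmax" using A9_bound[of 0 undefined] by simp
  have g_C: "g x \<le> Cmax" for x
    using g_le[OF D0, of x] A9_bound[of 0 x] by simp
  have geq: "g = (\<lambda>x. INF \<delta>\<in>{\<delta>. norm \<delta> \<le> norm \<theta>s}. ratio Q f (\<theta>s + \<delta>) x)"
    by (simp add: fun_eq_iff g_def D_def)
  have gmean: "integral\<^sup>L Q g \<ge> 1 - c" using A9_mean by (simp add: geq)
  have gint: "integrable Q g"
  proof (rule ccontr)
    assume "\<not> integrable Q g"
    then have "integral\<^sup>L Q g = 0" by (rule not_integrable_integral_eq)
    with gmean c_lt1 show False by simp
  qed
  have gmeas[measurable]: "g \<in> borel_measurable Q" using gint by auto
  interpret Q: prob_space Q by (rule Q_prob)
  define M where "M = PiM {..<n} (\<lambda>_. Q)"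
  show ?thesis
  proof (cases "n = 0")
    case True
    then show ?thesis by (intro bexI[of _ "{}"]) auto
  next
    case False
    then have n0: "0 < n" by simp
    interpret P: product_prob_space "\<lambda>_. Q" "{..<n}"
      by unfold_locales
    interpret M: prob_space M unfolding M_def by (rule P.P.prob_space_axioms)
    have comp: "distr M Q (\<lambda>xs. xs i) = Q" if "i < n" for i
      unfolding M_def by (rule P.PiM_component) (use that in auto)
    have meas_i[measurable]: "(\<lambda>xs. xs i) \<in> measurable M Q" if "i < n" for i
      unfolding M_def using that by (intro measurable_component_singleton) auto
    have distr_g: "distr M borel (\<lambda>xs. g (xs i)) = distr Q borel g" if "i < n" for i
    proof -
      have "distr M borel (\<lambda>xs. g (xs i)) = distr (distr M Q (\<lambda>xs. xs i)) borel g"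
        using that by (subst distr_distr) (auto simp: comp_def)
      then show ?thesis using comp[OF that] by simp
    qed
    have indep0: "M.indep_vars (\<lambda>_. Q) (\<lambda>i xs. xs i) {..<n}"
    proof (subst M.indep_vars_iff_distr_eq_PiM')
      show "{..<n} \<noteq> {}" using n0 by auto
      show "(\<lambda>xs. xs i) \<in> measurable M Q" if "i \<in> {..<n}" for i using that meas_i by simp
      have "distr M (PiM {..<n} (\<lambda>_. Q)) (\<lambda>x. \<lambda>i\<in>{..<n}. x i) = M"
        unfolding M_def using P.distr_PiM_restrict_finite[of "{..<n}"] by simp
      moreover have "(PiM {..<n} (\<lambda>i. distr M Q (\<lambda>xs. xs i))) = M"
        unfolding M_def[symmetric] by (subst M_def, intro PiM_cong) (auto simp: comp)
      ultimately show "distr M (PiM {..<n} (\<lambda>_. Q)) (\<lambda>x. \<lambda>i\<in>{..<n}. x i) =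
          PiM {..<n} (\<lambda>i. distr M Q (\<lambda>xs. xs i))" by simp
    qed
    have indep: "M.indep_vars (\<lambda>_. borel) (\<lambda>i xs. g (xs i)) {..<n}"
      by (rule M.indep_vars_compose2[OF indep0]) simp
    interpret H: Hoeffding_ineq_iid M "{..<n}" "\<lambda>i xs. g (xs i)" "\<lambda>xs. g (xs 0)" 0 Cmax
      "M.expectation (\<lambda>xs. g (xs 0))"
    proof unfold_locales
      show "finite {..<n}" by simp
      show "M.indep_vars (\<lambda>_. borel) (\<lambda>i xs. g (xs i)) {..<n}" by (rule indep)
      show "distr M borel (\<lambda>xs. g (xs i)) = distr M borel (\<lambda>xs. g (xs 0))" if "i \<in> {..<n}" for i
        using distr_g[of i] distr_g[of 0] that n0 by simp
      show "(\<lambda>xs. g (xs 0)) \<in> borel_measurable M" by (rule measurable_compose[OF meas_i[OF n0] gmeas])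
      show "AE x in M. g (x 0) \<in> {0..Cmax}" using g_nn g_C by auto
    qed simp
    have mu: "M.expectation (\<lambda>xs. g (xs 0)) = integral\<^sup>L Q g"
    proof -
      have "M.expectation (\<lambda>xs. g (xs 0)) = integral\<^sup>L (distr M Q (\<lambda>xs. xs 0)) g"
        using integral_distr[OF meas_i[OF n0] gmeas] by simp
      then show ?thesis using comp[OF n0] by simp
    qed
    define B where "B = {x\<in>space M. (\<Sum>i\<in>{..<n}. g (x i)) / real (card {..<n})
                     \<le> M.expectation (\<lambda>xs. g (xs 0)) - \<epsilon>}"
    have HB: "M.prob B \<le> exp (- 2 * real (card {..<n}) * \<epsilon>\<^sup>2 / (Cmax - 0)\<^sup>2)"
      unfolding B_def using eps_pos Cpos n0 by (intro H.Hoeffding_ineq_le') auto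
    have Bsets: "B \<in> sets M" unfolding B_def using n0 by measurable
    define A where "A = space M - B"
    have Asets: "A \<in> sets M" unfolding A_def using Bsets by auto
    have mA: "M.prob A \<ge> 1 - exp (- 2 * real n * \<epsilon>\<^sup>2 / Cmax\<^sup>2)"
      using HB M.prob_compl[OF Bsets] unfolding A_def by simp
    have sub: "A \<subseteq> {xs \<in> space M. \<forall>x \<delta>. norm \<delta> \<le> norm \<theta>s \<longrightarrow>
                     rhat f n xs (\<theta>s + \<delta>) x \<le> Cmax / (1 - c - \<epsilon>)}"
    proof safe
      fix xs assume xsA: "xs \<in> A"
      then show "xs \<in> space M" by (simp add: A_def)
      fix x and \<delta> :: 'd assume nd: "norm \<delta> \<le> norm \<theta>s"
      define m where "m = (\<Sum>i<n. g (xs i)) / real n"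
      have m_gt: "m > 1 - c - \<epsilon>"
        using xsA gmean mu unfolding A_def B_def m_def by auto
      have m_pos: "m > 0" using m_gt eps_lt by simp
      define \<theta> where "\<theta> = \<theta>s + \<delta>"
      define N where "N = Nnorm Q f \<theta>"
      have rpos: "0 < ratio Q f \<theta> x" using A9_bound[OF nd] by (simp add: \<theta>_def)
      have Npos: "N > 0"
      proof -
        have "0 < exp (\<theta> \<bullet> f x) / N" using rpos by (simp add: ratio_def N_def)
        then show ?thesis by (simp add: zero_less_divide_iff)
      qed
      have ex: "exp (\<theta> \<bullet> f y) = N * ratio Q f \<theta> y" for y
        using Npos by (simp add: ratio_def N_def)
      have "\<delta> \<in> D" using nd by (simp add: D_def)
      then have gr: "g y \<le> ratio Q f \<theta> y" for y using g_le by (simp add: \<theta>_def)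
      have "N * m \<le> Nhat f n xs \<theta>"
      proof -
        have "(\<Sum>i<n. g (xs i)) \<le> (\<Sum>i<n. ratio Q f \<theta> (xs i))"
          by (intro sum_mono gr)
        then have "N * (\<Sum>i<n. g (xs i)) \<le> N * (\<Sum>i<n. ratio Q f \<theta> (xs i))"
          using Npos by simp
        then show ?thesis
          unfolding Nhat_def m_def ex using n0 by (simp add: sum_distrib_left divide_right_mono)
      qed
      moreover have Nm: "N * m > 0" using Npos m_pos by simp
      ultimately have "rhat f n xs \<theta> x \<le> exp (\<theta> \<bullet> f x) / (N * m)"
        unfolding rhat_def by (intro divide_left_mono) auto
      also have "\<dots> = ratio Q f \<theta> x / m" using Npos by (simp add: ex)
      also have "\<dots> \<le> Cmax / m"
        using A9_bound[OF nd] m_pos by (intro divide_right_mono) (auto simp: \<theta>_def)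
      also have "\<dots> \<le> Cmax / (1 - c - \<epsilon>)"
        using m_gt Cpos eps_lt by (intro divide_left_mono) auto
      finally show "rhat f n xs (\<theta>s + \<delta>) x \<le> Cmax / (1 - c - \<epsilon>)" by (simp add: \<theta>_def)
    qed
    show ?thesis
      using Asets sub mA unfolding M_def by blast
  qed
qed

end
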